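(* Let $(\mathcal{P},+)$ be a reparametrization category. For all $\ell',\ell''\in\mathrm{Obj}(\mathcal{P})$ there is an isomorphism of $\mathcal{P}$-spaces, natural with respect to $\ell'$ and $\ell''$, \[\int^{\ell}\mathcal{P}(-,\ell+\ell')\times\mathcal{P}(\ell,\ell'')\cong\mathcal{P}(-,\ell''+\ell'),\] which takes the equivalence class of $(\psi,\phi)\in\mathcal{P}(-,\ell+\ell')\times\mathcal{P}(\ell,\ell'')$ to $(\phi\otimes\mathrm{id}_{\ell'})\psi$.
   Context: All enriched categories are enriched over the cartesian closed category $\mathbf{Top}$ of ($\Delta$-generated) topological spaces. A reparametrization category is a small enriched semimonoidal category $(\mathcal{P},\otimes)$ (enriched meaning the hom-sets are spaces, composition is continuous and $\mathcal{P}(a,b)\times\mathcal{P}(c,d)\to\mathcal{P}(a\otimes c,b\otimes d)$ is continuous) such that: (1) the semimonoidal structure is strict; (2) all spaces $\mathcal{P}(\ell,\ell')$ are contractible; (3) for every map $\phi:\ell\to\ell'$ and all objects $\ell'_1,\ell'_2$ with $\ell'_1\otimes\ell'_2=\ell'$, there exist maps $\phi_1:\ell_1\to\ell'_1$, $\phi_2:\ell_2\to\ell'_2$ with $\phi=\phi_1\otimes\phi_2$. One writes $\ell+\ell':=\ell\otimes\ell'$ on objects. A $\mathcal{P}$-space is an enriched functor $\mathcal{P}^{op}\to\mathbf{Top}$; the coend is taken in the category of $\mathcal{P}$-spaces. *)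

theory Defs
  imports "HOL-Analysis.Analysis" "HOL-Homology.Homology"
begin

definition simplex_top :: "nat \<Rightarrow> (nat \<Rightarrow> real) topology" where
  "simplex_top n = subtopology (powertop_real UNIV) (standard_simplex n)"

definition dtop :: "'a topology \<Rightarrow> 'a topology" where
  "dtop X = topology (\<lambda>U. U \<subseteq> topspace X \<and>
     (\<forall>n \<sigma>. continuous_map (simplex_top n) X \<sigma> \<longrightarrow>
        openin (simplex_top n) {t \<in> topspace (simplex_top n). \<sigma> t \<in> U}))"

definition delta_generated :: "'a topology \<Rightarrow> bool" where
  "delta_generated X \<longleftrightarrow> dtop X = X"

definition dprod :: "'a topology \<Rightarrow> 'b topology \<Rightarrow> ('a \<times> 'b) topology" where
  "dprod X Y = dtop (prod_topology X Y)"

definition contractible_top :: "'a topology \<Rightarrow> bool" where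
  "contractible_top X \<longleftrightarrow> topspace X \<noteq> {} \<and> contractible_space X"

definition quot_top :: "'a topology \<Rightarrow> ('a \<times> 'a) set \<Rightarrow> 'a set topology" where
  "quot_top X E = topology (\<lambda>U. U \<subseteq> topspace X // E \<and> openin X (\<Union>U))"

text \<open>A small category enriched over Delta-generated spaces with a strict semimonoidal
structure.  Objects are the elements of type 'o; Hom P a b is the hom-space
(its carrier is the hom-set).\<close>

record ('o, 'm) ecat =
  Hom  :: "'o \<Rightarrow> 'o \<Rightarrow> 'm topology"
  Comp :: "'m \<Rightarrow> 'm \<Rightarrow> 'm"     (* Comp g f = g \<circ> f *)
  Ident :: "'o \<Rightarrow> 'm"
  TenO :: "'o \<Rightarrow> 'o \<Rightarrow> 'o"
  TenM :: "'m \<Rightarrow> 'm \<Rightarrow> 'm"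

abbreviation hom :: "('o, 'm, 'x) ecat_scheme \<Rightarrow> 'o \<Rightarrow> 'o \<Rightarrow> 'm set" where
  "hom P a b \<equiv> topspace (Hom P a b)"

definition reparam_cat :: "('o, 'm, 'x) ecat_scheme \<Rightarrow> bool" where
  "reparam_cat P \<longleftrightarrow>
    \<comment> \<open>category: disjoint hom-sets, identities, composition, unit and associativity laws\<close>
    (\<forall>a b a' b' f. f \<in> hom P a b \<and> f \<in> hom P a' b' \<longrightarrow> a = a' \<and> b = b') \<and>
    (\<forall>a. Ident P a \<in> hom P a a) \<and>
    (\<forall>a b c f g. f \<in> hom P a b \<and> g \<in> hom P b c \<longrightarrow> Comp P g f \<in> hom P a c) \<and>
    (\<forall>a b f. f \<in> hom P a b \<longrightarrow> Comp P (Ident P b) f = f \<and> Comp P f (Ident P a) = f) \<and>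
    (\<forall>a b c d f g h. f \<in> hom P a b \<and> g \<in> hom P b c \<and> h \<in> hom P c d \<longrightarrow>
        Comp P h (Comp P g f) = Comp P (Comp P h g) f) \<and>
    \<comment> \<open>enrichment over Delta-generated spaces\<close>
    (\<forall>a b. delta_generated (Hom P a b)) \<and>
    (\<forall>a b c. continuous_map (dprod (Hom P a b) (Hom P b c)) (Hom P a c)
                (\<lambda>(f, g). Comp P g f)) \<and>
    \<comment> \<open>semimonoidal structure: a bifunctor, continuous on hom-spaces\<close>
    (\<forall>a b c d f g. f \<in> hom P a b \<and> g \<in> hom P c d \<longrightarrow>
        TenM P f g \<in> hom P (TenO P a c) (TenO P b d)) \<and>
    (\<forall>a c. TenM P (Ident P a) (Ident P c) = Ident P (TenO P a c)) \<and>
    (\<forall>a b e c d e' f g f' g'. f \<in> hom P a b \<and> g \<in> hom P b e \<and>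
        f' \<in> hom P c d \<and> g' \<in> hom P d e' \<longrightarrow>
        TenM P (Comp P g f) (Comp P g' f') = Comp P (TenM P g g') (TenM P f f')) \<and>
    (\<forall>a b c d. continuous_map (dprod (Hom P a b) (Hom P c d))
                  (Hom P (TenO P a c) (TenO P b d)) (\<lambda>(f, g). TenM P f g)) \<and>
    \<comment> \<open>(1) strictness: associativity holds on the nose\<close>
    (\<forall>a b c. TenO P (TenO P a b) c = TenO P a (TenO P b c)) \<and>
    (\<forall>a b c d e e' f g h. f \<in> hom P a b \<and> g \<in> hom P c d \<and> h \<in> hom P e e' \<longrightarrow>
        TenM P (TenM P f g) h = TenM P f (TenM P g h)) \<and>
    \<comment> \<open>(2) all hom-spaces contractible\<close>
    (\<forall>a b. contractible_top (Hom P a b)) \<and>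
    \<comment> \<open>(3) splitting of morphisms along a splitting of the codomain\<close>
    (\<forall>l l' l1' l2' \<phi>. \<phi> \<in> hom P l l' \<and> TenO P l1' l2' = l' \<longrightarrow>
        (\<exists>l1 l2 \<phi>1 \<phi>2. \<phi>1 \<in> hom P l1 l1' \<and> \<phi>2 \<in> hom P l2 l2' \<and>
            TenO P l1 l2 = l \<and> \<phi> = TenM P \<phi>1 \<phi>2))"

text \<open>The coproduct over l of P(k, l+l') \<times> P(l, l''); elements are tagged
triples (l, psi, phi).\<close>
definition coend_sum :: "('o, 'm, 'x) ecat_scheme \<Rightarrow> 'o \<Rightarrow> 'o \<Rightarrow> 'o \<Rightarrow> ('o \<times> 'm \<times> 'm) topology" where
  "coend_sum P k l' l'' =
     sum_topology (\<lambda>l. dprod (Hom P k (TenO P l l')) (Hom P l l'')) UNIV"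

definition coend_gen :: "('o, 'm, 'x) ecat_scheme \<Rightarrow> 'o \<Rightarrow> 'o \<Rightarrow> 'o \<Rightarrow> (('o \<times> 'm \<times> 'm) \<times> ('o \<times> 'm \<times> 'm)) set" where
  "coend_gen P k l' l'' =
     {((b, Comp P (TenM P \<kappa> (Ident P l')) \<psi>, \<phi>), (a, \<psi>, Comp P \<phi> \<kappa>)) | a b \<kappa> \<psi> \<phi>.
        \<kappa> \<in> hom P a b \<and> \<psi> \<in> hom P k (TenO P a l') \<and> \<phi> \<in> hom P b l''}"

definition coend_eqv :: "('o, 'm, 'x) ecat_scheme \<Rightarrow> 'o \<Rightarrow> 'o \<Rightarrow> 'o \<Rightarrow> (('o \<times> 'm \<times> 'm) \<times> ('o \<times> 'm \<times> 'm)) set" where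
  "coend_eqv P k l' l'' =
     Id_on (topspace (coend_sum P k l' l'')) \<union>
     (coend_gen P k l' l'' \<union> (coend_gen P k l' l'')\<inverse>)\<^sup>+"

text \<open>The coend (\<integral>^l P(-, l+l') \<times> P(l, l''))(k) as a (quotient) space.\<close>
definition coend_space :: "('o, 'm, 'x) ecat_scheme \<Rightarrow> 'o \<Rightarrow> 'o \<Rightarrow> 'o \<Rightarrow> ('o \<times> 'm \<times> 'm) set topology" where
  "coend_space P k l' l'' = quot_top (coend_sum P k l' l'') (coend_eqv P k l' l'')"

definition coend_class :: "('o, 'm, 'x) ecat_scheme \<Rightarrow> 'o \<Rightarrow> 'o \<Rightarrow> 'o \<Rightarrow> 'o \<times> 'm \<times> 'm \<Rightarrow> ('o \<times> 'm \<times> 'm) set" where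
  "coend_class P k l' l'' x = coend_eqv P k l' l'' `` {x}"

end

theory Submission
  imports Defs
begin



lemma istop_dtop: "istopology (\<lambda>U. U \<subseteq> topspace X \<and>
     (\<forall>n \<sigma>. continuous_map (simplex_top n) X \<sigma> \<longrightarrow>
        openin (simplex_top n) {t \<in> topspace (simplex_top n). \<sigma> t \<in> U}))"
proof -
  have 1: "{t \<in> topspace Z. \<sigma> t \<in> S \<inter> T} = {t \<in> topspace Z. \<sigma> t \<in> S} \<inter> {t \<in> topspace Z. \<sigma> t \<in> T}" for Z S T \<sigma>
    by auto
  have 2: "{t \<in> topspace Z. \<sigma> t \<in> \<Union>K} = (\<Union>S\<in>K. {t \<in> topspace Z. \<sigma> t \<in> S})" for Z K \<sigma>
    by auto
  show ?thesis unfolding istopology_def 1 2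
    by (auto intro!: openin_Int openin_Union)
qed

lemma openin_dtop: "openin (dtop X) U \<longleftrightarrow> U \<subseteq> topspace X \<and>
     (\<forall>n \<sigma>. continuous_map (simplex_top n) X \<sigma> \<longrightarrow>
        openin (simplex_top n) {t \<in> topspace (simplex_top n). \<sigma> t \<in> U})"
  unfolding dtop_def by (simp add: topology_inverse'[OF istop_dtop])

lemma topspace_dtop[simp]: "topspace (dtop X) = topspace X"
proof -
  have "openin (dtop X) (topspace X)"
    unfolding openin_dtop by (auto simp: continuous_map_def)
  moreover have "openin (dtop X) U \<Longrightarrow> U \<subseteq> topspace X" for U by (simp add: openin_dtop)
  ultimately show ?thesis by (metis openin_subset openin_topspace subset_antisym)
qed

lemma continuous_map_dtop:
  assumes "continuous_map X Y f" shows "continuous_map (dtop X) (dtop Y) f"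
  unfolding continuous_map_def
proof safe
  fix x assume "x \<in> topspace (dtop X)" then show "f x \<in> topspace (dtop Y)"
    using assms by (auto simp: continuous_map_def)
next
  fix U assume U: "openin (dtop Y) U"
  show "openin (dtop X) {x \<in> topspace (dtop X). f x \<in> U}"
    unfolding openin_dtop topspace_dtop
  proof safe
    fix n \<sigma> assume s: "continuous_map (simplex_top n) X \<sigma>"
    then have "continuous_map (simplex_top n) Y (f \<circ> \<sigma>)"
      using assms continuous_map_compose by blast
    then have "openin (simplex_top n) {t \<in> topspace (simplex_top n). (f \<circ> \<sigma>) t \<in> U}"
      using U unfolding openin_dtop by blast
    moreover have "{t \<in> topspace (simplex_top n). (f \<circ> \<sigma>) t \<in> U} =
       {t \<in> topspace (simplex_top n). \<sigma> t \<in> {x \<in> topspace X. f x \<in> U}}"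
      using s by (auto simp: continuous_map_def)
    ultimately show "openin (simplex_top n) {t \<in> topspace (simplex_top n). \<sigma> t \<in> {x \<in> topspace X. f x \<in> U}}"
      by simp
  qed
qed

lemma continuous_map_from_dtop:
  assumes "continuous_map X Y f" shows "continuous_map (dtop X) Y f"
  unfolding continuous_map_def
proof safe
  fix x assume "x \<in> topspace (dtop X)" then show "f x \<in> topspace Y"
    using assms by (auto simp: continuous_map_def)
next
  fix U assume U: "openin Y U"
  then have o: "openin X {x \<in> topspace X. f x \<in> U}" using assms by (simp add: continuous_map_def)
  show "openin (dtop X) {x \<in> topspace (dtop X). f x \<in> U}"
    unfolding openin_dtop topspace_dtop
  proof safe
    fix n \<sigma> assume s: "continuous_map (simplex_top n) X \<sigma>"
    show "openin (simplex_top n) {t \<in> topspace (simplex_top n). \<sigma> t \<in> {x \<in> topspace X. f x \<in> U}}"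
      using continuous_map_def o s by fastforce
  qed
qed

lemma continuous_map_into_dtop:
  assumes "delta_generated Z" "continuous_map Z X f" shows "continuous_map Z (dtop X) f"
  using continuous_map_dtop[OF assms(2)] assms(1) by (simp add: delta_generated_def)

lemma topspace_dprod[simp]: "topspace (dprod X Y) = topspace X \<times> topspace Y"
  by (simp add: dprod_def)

lemma istop_quot:
  assumes "equiv (topspace X) E"
  shows "istopology (\<lambda>U. U \<subseteq> topspace X // E \<and> openin X (\<Union>U))"
  unfolding istopology_def
proof safe
  fix S T assume S: "S \<subseteq> topspace X // E" "openin X (\<Union>S)" and T: "T \<subseteq> topspace X // E" "openin X (\<Union>T)"
  have "\<Union>(S \<inter> T) = \<Union>S \<inter> \<Union>T"
  proof
    show "\<Union>S \<inter> \<Union>T \<subseteq> \<Union>(S \<inter> T)"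
    proof
      fix x assume "x \<in> \<Union>S \<inter> \<Union>T"
      then obtain A B where "A \<in> S" "B \<in> T" "x \<in> A" "x \<in> B" by auto
      then have "A = B" using S T quotient_disj[OF assms] by blast
      then show "x \<in> \<Union>(S \<inter> T)" using \<open>A \<in> S\<close> \<open>B \<in> T\<close> \<open>x \<in> A\<close> by blast
    qed
  qed auto
  then show "openin X (\<Union>(S \<inter> T))" using S T by auto
next
  fix K assume "\<forall>S\<in>K. S \<subseteq> topspace X // E \<and> openin X (\<Union>S)"
  then have "openin X (\<Union>S\<in>K. \<Union>S)" by (intro openin_Union) auto
  moreover have "(\<Union>S\<in>K. \<Union>S) = \<Union>(\<Union>K)" by blast
  ultimately show "openin X (\<Union>(\<Union>K))" by simp
qed auto

lemma openin_quot:
  assumes "equiv (topspace X) E"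
  shows "openin (quot_top X E) U \<longleftrightarrow> U \<subseteq> topspace X // E \<and> openin X (\<Union>U)"
  unfolding quot_top_def by (simp add: topology_inverse'[OF istop_quot[OF assms]])

lemma topspace_quot:
  assumes "equiv (topspace X) E"
  shows "topspace (quot_top X E) = topspace X // E"
proof -
  have "openin (quot_top X E) (topspace X // E)"
    using assms by (simp add: openin_quot Union_quotient)
  then show ?thesis using assms
    by (metis openin_quot openin_subset openin_topspace subset_antisym)
qed




context
  fixes P :: "('o, 'm, 'x) ecat_scheme"
  assumes R: "reparam_cat P"
begin

lemma ax1:
  "\<forall>a. Ident P a \<in> hom P a a"
  using R unfolding reparam_cat_def by (elim conjE) assumption

lemma ax2:
  "\<forall>a b c f g. f \<in> hom P a b \<and> g \<in> hom P b c \<longrightarrow> Comp P g f \<in> hom P a c"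
  using R unfolding reparam_cat_def by (elim conjE) assumption

lemma ax3:
  "\<forall>a b f. f \<in> hom P a b \<longrightarrow> Comp P (Ident P b) f = f \<and> Comp P f (Ident P a) = f"
  using R unfolding reparam_cat_def by (elim conjE) assumption

lemma ax4:
  "\<forall>a b c d f g h. f \<in> hom P a b \<and> g \<in> hom P b c \<and> h \<in> hom P c d \<longrightarrow>
        Comp P h (Comp P g f) = Comp P (Comp P h g) f"
  using R unfolding reparam_cat_def by (elim conjE) assumption

lemma ax5:
  "\<forall>a b. delta_generated (Hom P a b)"
  using R unfolding reparam_cat_def by (elim conjE) assumption

lemma ax6:
  "\<forall>a b c. continuous_map (dprod (Hom P a b) (Hom P b c)) (Hom P a c) (\<lambda>(f, g). Comp P g f)"
  using R unfolding reparam_cat_def by (elim conjE) assumption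

lemma ax7:
  "\<forall>a b c d f g. f \<in> hom P a b \<and> g \<in> hom P c d \<longrightarrow>
        TenM P f g \<in> hom P (TenO P a c) (TenO P b d)"
  using R unfolding reparam_cat_def by (elim conjE) assumption

lemma ax8:
  "\<forall>a c. TenM P (Ident P a) (Ident P c) = Ident P (TenO P a c)"
  using R unfolding reparam_cat_def by (elim conjE) assumption

lemma ax9:
  "\<forall>a b e c d e' f g f' g'. f \<in> hom P a b \<and> g \<in> hom P b e \<and>
        f' \<in> hom P c d \<and> g' \<in> hom P d e' \<longrightarrow>
        TenM P (Comp P g f) (Comp P g' f') = Comp P (TenM P g g') (TenM P f f')"
  using R unfolding reparam_cat_def by (elim conjE) assumption

lemma ax10:
  "\<forall>a b c d. continuous_map (dprod (Hom P a b) (Hom P c d))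
                  (Hom P (TenO P a c) (TenO P b d)) (\<lambda>(f, g). TenM P f g)"
  using R unfolding reparam_cat_def by (elim conjE) assumption


lemma id_hom: "Ident P a \<in> hom P a a" using ax1 by blast
lemma comp_hom: "f \<in> hom P a b \<Longrightarrow> g \<in> hom P b c \<Longrightarrow> Comp P g f \<in> hom P a c"
  using ax2 by blast
lemma id_l: "f \<in> hom P a b \<Longrightarrow> Comp P (Ident P b) f = f" using ax3 by blast
lemma id_r: "f \<in> hom P a b \<Longrightarrow> Comp P f (Ident P a) = f" using ax3 by blast
lemma assoc: "f \<in> hom P a b \<Longrightarrow> g \<in> hom P b c \<Longrightarrow> h \<in> hom P c d \<Longrightarrow>
        Comp P h (Comp P g f) = Comp P (Comp P h g) f" using ax4 by blast
lemma dg: "delta_generated (Hom P a b)" using ax5 by blast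
lemma cont_comp: "continuous_map (dprod (Hom P a b) (Hom P b c)) (Hom P a c) (\<lambda>(f, g). Comp P g f)"
  using ax6 by blast
lemma ten_hom: "f \<in> hom P a b \<Longrightarrow> g \<in> hom P c d \<Longrightarrow> TenM P f g \<in> hom P (TenO P a c) (TenO P b d)"
  using ax7 by blast
lemma ten_id: "TenM P (Ident P a) (Ident P c) = Ident P (TenO P a c)"
  using ax8 by blast
lemma ten_comp: "f \<in> hom P a b \<Longrightarrow> g \<in> hom P b e \<Longrightarrow> f' \<in> hom P c d \<Longrightarrow> g' \<in> hom P d e' \<Longrightarrow>
        TenM P (Comp P g f) (Comp P g' f') = Comp P (TenM P g g') (TenM P f f')"
  using ax9 by blast
lemma cont_ten: "continuous_map (dprod (Hom P a b) (Hom P c d))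
                  (Hom P (TenO P a c) (TenO P b d)) (\<lambda>(f, g). TenM P f g)"
  using ax10 by blast

definition fx :: "'o \<Rightarrow> 'o \<times> 'm \<times> 'm \<Rightarrow> 'm" where
  "fx l' x = (case x of (l, \<psi>, \<phi>) \<Rightarrow> Comp P (TenM P \<phi> (Ident P l')) \<psi>)"

definition hh :: "'o \<Rightarrow> 'o \<Rightarrow> 'o \<Rightarrow> ('o \<times> 'm \<times> 'm) set \<Rightarrow> 'm" where
  "hh k l' l'' c = fx l' (SOME x. x \<in> c)"

lemma fx_hom: "\<psi> \<in> hom P k (TenO P l l') \<Longrightarrow> \<phi> \<in> hom P l l'' \<Longrightarrow> fx l' (l, \<psi>, \<phi>) \<in> hom P k (TenO P l'' l')"
  unfolding fx_def by (auto intro!: comp_hom ten_hom id_hom)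

lemma carrier: "topspace (coend_sum P k l' l'') = Sigma UNIV (\<lambda>l. hom P k (TenO P l l') \<times> hom P l l'')"
  by (simp add: coend_sum_def o_def)

lemma gen_sub: "coend_gen P k l' l'' \<subseteq> topspace (coend_sum P k l' l'') \<times> topspace (coend_sum P k l' l'')"
  unfolding carrier coend_gen_def
  by (auto intro!: comp_hom ten_hom id_hom)

lemma equiv_gen: assumes S: "S \<subseteq> C \<times> C" shows "equiv C (Id_on C \<union> (S \<union> S\<inverse>)\<^sup>+)"
proof -
  let ?R = "(S \<union> S\<inverse>)\<^sup>+"
  have S': "S \<union> S\<inverse> \<subseteq> C \<times> C" using S by blast
  have T: "?R \<subseteq> C \<times> C" using trancl_subset_Sigma[OF S'] .
  have sym: "sym ?R" by (intro sym_trancl) (auto simp: sym_def)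
  show ?thesis unfolding equiv_def
  proof (intro conjI)
    show "Id_on C \<union> ?R \<subseteq> C \<times> C" using T by auto
    show "refl_on C (Id_on C \<union> ?R)" using T by (auto simp: refl_on_def)
    show "sym (Id_on C \<union> ?R)" using sym by (auto simp: sym_def)
    show "trans (Id_on C \<union> ?R)"
    proof (rule transI)
      fix x y z assume "(x, y) \<in> Id_on C \<union> ?R" "(y, z) \<in> Id_on C \<union> ?R"
      then show "(x, z) \<in> Id_on C \<union> ?R"
        by (auto dest: trancl_trans)
    qed
  qed
qed

lemma eqv_equiv: "equiv (topspace (coend_sum P k l' l'')) (coend_eqv P k l' l'')"
  unfolding coend_eqv_def by (rule equiv_gen[OF gen_sub])

lemma gen_fx: "(x, y) \<in> coend_gen P k l' l'' \<Longrightarrow> fx l' x = fx l' y"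
proof -
  assume "(x, y) \<in> coend_gen P k l' l''"
  then obtain a b \<kappa> \<psi> \<phi> where e: "x = (b, Comp P (TenM P \<kappa> (Ident P l')) \<psi>, \<phi>)" "y = (a, \<psi>, Comp P \<phi> \<kappa>)"
    and h: "\<kappa> \<in> hom P a b" "\<psi> \<in> hom P k (TenO P a l')" "\<phi> \<in> hom P b l''"
    unfolding coend_gen_def by blast
  have "fx l' x = Comp P (TenM P \<phi> (Ident P l')) (Comp P (TenM P \<kappa> (Ident P l')) \<psi>)"
    using e by (simp add: fx_def)
  also have "\<dots> = Comp P (Comp P (TenM P \<phi> (Ident P l')) (TenM P \<kappa> (Ident P l'))) \<psi>"
    using h by (intro assoc) (auto intro!: ten_hom id_hom)
  also have "Comp P (TenM P \<phi> (Ident P l')) (TenM P \<kappa> (Ident P l')) = TenM P (Comp P \<phi> \<kappa>) (Comp P (Ident P l') (Ident P l'))"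
    using h by (intro ten_comp[symmetric]) (auto intro!: id_hom)
  also have "Comp P (Ident P l') (Ident P l') = Ident P l'" using id_l id_hom by blast
  finally show ?thesis using e by (simp add: fx_def)
qed

lemma eqv_fx: "(x, y) \<in> coend_eqv P k l' l'' \<Longrightarrow> fx l' x = fx l' y"
proof -
  assume "(x, y) \<in> coend_eqv P k l' l''"
  then consider "x = y" | "(x, y) \<in> (coend_gen P k l' l'' \<union> (coend_gen P k l' l'')\<inverse>)\<^sup>+"
    unfolding coend_eqv_def by blast
  then show ?thesis
  proof cases
    case 2
    then show ?thesis
    proof (induction rule: trancl_induct)
      case (base y) then show ?case using gen_fx by (metis UnE converse_iff)
    next
      case (step y z) then show ?case using gen_fx by (metis UnE converse_iff)
    qed
  qed simp
qed

lemma canon: "\<psi> \<in> hom P k (TenO P l l') \<Longrightarrow> \<phi> \<in> hom P l l'' \<Longrightarrow>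
   ((l, \<psi>, \<phi>), (l'', fx l' (l, \<psi>, \<phi>), Ident P l'')) \<in> coend_eqv P k l' l''"
proof -
  assume h: "\<psi> \<in> hom P k (TenO P l l')" "\<phi> \<in> hom P l l''"
  have "((l'', Comp P (TenM P \<phi> (Ident P l')) \<psi>, Ident P l''), (l, \<psi>, Comp P (Ident P l'') \<phi>)) \<in> coend_gen P k l' l''"
    unfolding coend_gen_def using h id_hom by blast
  moreover have "Comp P (Ident P l'') \<phi> = \<phi>" using h id_l by blast
  ultimately show ?thesis unfolding coend_eqv_def fx_def by auto
qed

lemma hh_class: "\<psi> \<in> hom P k (TenO P l l') \<Longrightarrow> \<phi> \<in> hom P l l'' \<Longrightarrow>
   hh k l' l'' (coend_class P k l' l'' (l, \<psi>, \<phi>)) = fx l' (l, \<psi>, \<phi>)"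
proof -
  assume h: "\<psi> \<in> hom P k (TenO P l l')" "\<phi> \<in> hom P l l''"
  let ?x = "(l, \<psi>, \<phi>)"
  have "?x \<in> topspace (coend_sum P k l' l'')" using h by (simp add: carrier)
  then have "?x \<in> coend_class P k l' l'' ?x"
    unfolding coend_class_def using eqv_equiv by (meson equiv_class_self)
  then have "(SOME y. y \<in> coend_class P k l' l'' ?x) \<in> coend_class P k l' l'' ?x" by (rule someI)
  then have "(?x, SOME y. y \<in> coend_class P k l' l'' ?x) \<in> coend_eqv P k l' l''"
    unfolding coend_class_def by blast
  then show ?thesis unfolding hh_def by (metis eqv_fx)
qed

end



context
  fixes P :: "('o, 'm, 'x) ecat_scheme"
  assumes R: "reparam_cat P"
begin

lemma cont_tenid: "continuous_map (Hom P l l'') (Hom P (TenO P l l') (TenO P l'' l')) (\<lambda>\<phi>. TenM P \<phi> (Ident P l'))"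
proof -
  have "continuous_map (Hom P l l'') (prod_topology (Hom P l l'') (Hom P l' l')) (\<lambda>\<phi>. (\<phi>, Ident P l'))"
    using id_hom[OF R] by (intro continuous_map_pairedI) auto
  then have "continuous_map (Hom P l l'') (dprod (Hom P l l'') (Hom P l' l')) (\<lambda>\<phi>. (\<phi>, Ident P l'))"
    unfolding dprod_def by (rule continuous_map_into_dtop[OF dg[OF R]])
  from continuous_map_compose[OF this cont_ten[OF R]] show ?thesis by (simp add: o_def)
qed

lemma cont_slice: "continuous_map (dprod (Hom P k (TenO P l l')) (Hom P l l'')) (Hom P k (TenO P l'' l'))
   (\<lambda>(\<psi>, \<phi>). Comp P (TenM P \<phi> (Ident P l')) \<psi>)"
proof -
  have "continuous_map (prod_topology (Hom P k (TenO P l l')) (Hom P l l''))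
     (prod_topology (Hom P k (TenO P l l')) (Hom P (TenO P l l') (TenO P l'' l'))) (\<lambda>(\<psi>, \<phi>). (\<psi>, TenM P \<phi> (Ident P l')))"
    unfolding case_prod_unfold
    by (intro continuous_map_pairedI continuous_map_fst continuous_map_compose[OF continuous_map_snd cont_tenid, unfolded o_def])
  then have "continuous_map (dprod (Hom P k (TenO P l l')) (Hom P l l''))
     (dprod (Hom P k (TenO P l l')) (Hom P (TenO P l l') (TenO P l'' l'))) (\<lambda>(\<psi>, \<phi>). (\<psi>, TenM P \<phi> (Ident P l')))"
    unfolding dprod_def by (rule continuous_map_dtop)
  from continuous_map_compose[OF this cont_comp[OF R]] show ?thesis
    by (simp add: o_def case_prod_unfold)
qed

lemma cont_canon: "continuous_map (Hom P k (TenO P l'' l')) (coend_sum P k l' l'') (\<lambda>f. (l'', f, Ident P l''))"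
proof -
  have "continuous_map (Hom P k (TenO P l'' l')) (prod_topology (Hom P k (TenO P l'' l')) (Hom P l'' l'')) (\<lambda>f. (f, Ident P l''))"
    using id_hom[OF R] by (intro continuous_map_pairedI) auto
  then have "continuous_map (Hom P k (TenO P l'' l')) (dprod (Hom P k (TenO P l'' l')) (Hom P l'' l'')) (\<lambda>f. (f, Ident P l''))"
    unfolding dprod_def by (rule continuous_map_into_dtop[OF dg[OF R]])
  from continuous_map_compose[OF this continuous_map_component_injection[of l'' UNIV "\<lambda>l. dprod (Hom P k (TenO P l l')) (Hom P l l'')"]]
  show ?thesis by (simp add: o_def coend_sum_def)
qed

end



lemma homeo:
  fixes P :: "('o, 'm, 'x) ecat_scheme"
  assumes R: "reparam_cat P"
  shows "homeomorphic_map (coend_space P k l' l'') (Hom P k (TenO P l'' l')) (hh P k l' l'')"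
proof -
  let ?X = "coend_sum P k l' l''" and ?E = "coend_eqv P k l' l''" and ?Y = "Hom P k (TenO P l'' l')"
  let ?C = "topspace ?X"
  let ?g = "\<lambda>f. coend_class P k l' l'' (l'', f, Ident P l'')"
  have eq: "equiv ?C ?E" by (rule eqv_equiv[OF R])
  have top: "topspace (coend_space P k l' l'') = ?C // ?E"
    unfolding coend_space_def by (rule topspace_quot[OF eq])
  have opn: "openin (coend_space P k l' l'') U \<longleftrightarrow> U \<subseteq> ?C // ?E \<and> openin ?X (\<Union>U)" for U
    unfolding coend_space_def by (rule openin_quot[OF eq])
  have cls: "coend_class P k l' l'' x = ?E `` {x}" for x by (simp add: coend_class_def)
  have memC: "(l, \<psi>, \<phi>) \<in> ?C \<longleftrightarrow> \<psi> \<in> hom P k (TenO P l l') \<and> \<phi> \<in> hom P l l''" for l \<psi> \<phi>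
    by (simp add: carrier[OF R])
  have hc: "x \<in> ?C \<Longrightarrow> hh P k l' l'' (?E `` {x}) = fx P l' x" for x
    using hh_class[OF R] memC cls by (metis prod_cases3)
  have canonE: "x \<in> ?C \<Longrightarrow> (x, (l'', fx P l' x, Ident P l'')) \<in> ?E" for x
    using canon[OF R] memC by (metis prod_cases3)
  have fxC: "x \<in> ?C \<Longrightarrow> fx P l' x \<in> hom P k (TenO P l'' l')" for x
    using fx_hom[OF R] memC by (metis prod_cases3)
  have idC: "f \<in> hom P k (TenO P l'' l') \<Longrightarrow> (l'', f, Ident P l'') \<in> ?C" for f
    using memC id_hom[OF R] by blast
  have fx_id: "f \<in> hom P k (TenO P l'' l') \<Longrightarrow> fx P l' (l'', f, Ident P l'') = f" for f
    using ten_id[OF R] id_l[OF R] by (simp add: fx_def[OF R])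
  show ?thesis unfolding homeomorphic_map_maps
  proof (intro exI[of _ ?g])
    show "homeomorphic_maps (coend_space P k l' l'') ?Y (hh P k l' l'') ?g"
      unfolding homeomorphic_maps_def
    proof (intro conjI ballI)
      show "continuous_map (coend_space P k l' l'') ?Y (hh P k l' l'')"
        unfolding continuous_map_def
      proof (intro conjI allI impI)
        show "hh P k l' l'' \<in> topspace (coend_space P k l' l'') \<rightarrow> topspace ?Y"
          unfolding top using hc fxC by (auto elim!: quotientE)
      next
        fix U assume U: "openin ?Y U"
        let ?S = "{c \<in> topspace (coend_space P k l' l''). hh P k l' l'' c \<in> U}"
        have un: "\<Union>?S = {x \<in> ?C. fx P l' x \<in> U}"
        proof
          show "\<Union>?S \<subseteq> {x \<in> ?C. fx P l' x \<in> U}"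
          proof
            fix y assume "y \<in> \<Union>?S"
            then obtain c where c: "c \<in> ?C // ?E" "hh P k l' l'' c \<in> U" "y \<in> c" unfolding top by blast
            then obtain x where x: "x \<in> ?C" "c = ?E `` {x}" by (auto elim!: quotientE)
            then have "(x, y) \<in> ?E" using c by blast
            then have "y \<in> ?C" "fx P l' x = fx P l' y" using eqv_fx[OF R] eq by (auto dest: equiv_class_eq_iff[THEN iffD1])
            then show "y \<in> {x \<in> ?C. fx P l' x \<in> U}" using c x hc by auto
          qed
        next
          show "{x \<in> ?C. fx P l' x \<in> U} \<subseteq> \<Union>?S"
          proof
            fix x assume x: "x \<in> {x \<in> ?C. fx P l' x \<in> U}"
            then have "?E `` {x} \<in> ?S" "x \<in> ?E `` {x}"
              using hc top quotientI equiv_class_self[OF eq] by auto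
            then show "x \<in> \<Union>?S" by blast
          qed
        qed
        have "openin ?X {x \<in> ?C. fx P l' x \<in> U}"
          unfolding coend_sum_def openin_sum_topology
        proof (intro conjI ballI)
          show "{x \<in> topspace (sum_topology (\<lambda>l. dprod (Hom P k (TenO P l l')) (Hom P l l'')) UNIV). fx P l' x \<in> U}
             \<subseteq> Sigma UNIV (topspace \<circ> (\<lambda>l. dprod (Hom P k (TenO P l l')) (Hom P l l'')))" by auto
          fix l :: 'o
          have "openin (dprod (Hom P k (TenO P l l')) (Hom P l l''))
             {z \<in> topspace (dprod (Hom P k (TenO P l l')) (Hom P l l'')). (\<lambda>(\<psi>, \<phi>). Comp P (TenM P \<phi> (Ident P l')) \<psi>) z \<in> U}"
            using cont_slice[OF R] U unfolding continuous_map_def by blast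
          moreover have "{z \<in> topspace (dprod (Hom P k (TenO P l l')) (Hom P l l'')). (\<lambda>(\<psi>, \<phi>). Comp P (TenM P \<phi> (Ident P l')) \<psi>) z \<in> U}
            = {z. (l, z) \<in> {x \<in> topspace (sum_topology (\<lambda>l. dprod (Hom P k (TenO P l l')) (Hom P l l'')) UNIV). fx P l' x \<in> U}}"
            by (auto simp: fx_def[OF R])
          ultimately show "openin (dprod (Hom P k (TenO P l l')) (Hom P l l''))
             {z. (l, z) \<in> {x \<in> topspace (sum_topology (\<lambda>l. dprod (Hom P k (TenO P l l')) (Hom P l l'')) UNIV). fx P l' x \<in> U}}"
            by simp
        qed
        then show "openin (coend_space P k l' l'') ?S"
          unfolding opn un[symmetric] by (auto simp: top)
      qed
    next
      show "continuous_map ?Y (coend_space P k l' l'') ?g"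
        unfolding continuous_map_def
      proof (intro conjI allI impI)
        show "?g \<in> topspace ?Y \<rightarrow> topspace (coend_space P k l' l'')"
          unfolding top cls using idC by (auto intro: quotientI)
      next
        fix U assume "openin (coend_space P k l' l'') U"
        then have U: "U \<subseteq> ?C // ?E" "openin ?X (\<Union>U)" using opn by auto
        have "openin ?Y {f \<in> topspace ?Y. (l'', f, Ident P l'') \<in> \<Union>U}"
          using cont_canon[OF R] U(2) unfolding continuous_map_def by blast
        moreover have "{f \<in> topspace ?Y. (l'', f, Ident P l'') \<in> \<Union>U} = {f \<in> topspace ?Y. ?g f \<in> U}"
        proof (intro Collect_cong conj_cong refl)
          fix f assume f: "f \<in> topspace ?Y"
          show "((l'', f, Ident P l'') \<in> \<Union>U) = (?g f \<in> U)"
          proof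
            assume "(l'', f, Ident P l'') \<in> \<Union>U"
            then obtain c where c: "c \<in> U" "(l'', f, Ident P l'') \<in> c" by blast
            then obtain x where x: "x \<in> ?C" "c = ?E `` {x}" using U(1) by (auto elim!: quotientE)
            then have "(x, (l'', f, Ident P l'')) \<in> ?E" using c by blast
            then have "?E `` {x} = ?E `` {(l'', f, Ident P l'')}"
              using eq by (rule equiv_class_eq[rotated])
            then show "?g f \<in> U" using c x cls by simp
          next
            assume "?g f \<in> U"
            moreover have "(l'', f, Ident P l'') \<in> ?g f"
              unfolding cls using equiv_class_self[OF eq idC[OF f]] .
            ultimately show "(l'', f, Ident P l'') \<in> \<Union>U" by blast
          qed
        qed
        ultimately show "openin ?Y {f \<in> topspace ?Y. ?g f \<in> U}" by simp
      qed
    next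
      fix c assume "c \<in> topspace (coend_space P k l' l'')"
      then obtain x where x: "x \<in> ?C" "c = ?E `` {x}" unfolding top by (auto elim!: quotientE)
      have "?g (hh P k l' l'' c) = ?E `` {(l'', fx P l' x, Ident P l'')}" using hc x cls by simp
      also have "\<dots> = ?E `` {x}" using canonE[OF x(1)] eq by (metis equiv_class_eq)
      finally show "?g (hh P k l' l'' c) = c" using x by simp
    next
      fix f assume f: "f \<in> topspace ?Y"
      show "hh P k l' l'' (?g f) = f" using hc[OF idC[OF f]] fx_id[OF f] cls by simp
    qed
  qed
qed




theorem lemma3p1:
  fixes P :: "('o, 'm, 'x) ecat_scheme"
  assumes "reparam_cat P"
  shows "\<exists>h :: 'o \<Rightarrow> 'o \<Rightarrow> 'o \<Rightarrow> ('o \<times> 'm \<times> 'm) set \<Rightarrow> 'm.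
    \<comment> \<open>for each k, l', l'': a homeomorphism sending [(psi, phi)] to (phi \<otimes> id) psi\<close>
    (\<forall>k l' l''.
       homeomorphic_map (coend_space P k l' l'') (Hom P k (TenO P l'' l')) (h k l' l'') \<and>
       (\<forall>l \<psi> \<phi>. \<psi> \<in> hom P k (TenO P l l') \<and> \<phi> \<in> hom P l l'' \<longrightarrow>
          h k l' l'' (coend_class P k l' l'' (l, \<psi>, \<phi>)) =
          Comp P (TenM P \<phi> (Ident P l')) \<psi>)) \<and>
    \<comment> \<open>naturality in k (so that it is a morphism of P-spaces)\<close>
    (\<forall>k0 k l' l'' \<kappa> l \<psi> \<phi>. \<kappa> \<in> hom P k0 k \<and> \<psi> \<in> hom P k (TenO P l l') \<and> \<phi> \<in> hom P l l'' \<longrightarrow>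
       h k0 l' l'' (coend_class P k0 l' l'' (l, Comp P \<psi> \<kappa>, \<phi>)) =
       Comp P (h k l' l'' (coend_class P k l' l'' (l, \<psi>, \<phi>))) \<kappa>) \<and>
    \<comment> \<open>naturality in l'\<close>
    (\<forall>k l1' l2' l'' \<mu> l \<psi> \<phi>. \<mu> \<in> hom P l1' l2' \<and> \<psi> \<in> hom P k (TenO P l l1') \<and> \<phi> \<in> hom P l l'' \<longrightarrow>
       h k l2' l'' (coend_class P k l2' l'' (l, Comp P (TenM P (Ident P l) \<mu>) \<psi>, \<phi>)) =
       Comp P (TenM P (Ident P l'') \<mu>) (h k l1' l'' (coend_class P k l1' l'' (l, \<psi>, \<phi>)))) \<and>
    \<comment> \<open>naturality in l''\<close>
    (\<forall>k l' l1'' l2'' \<nu> l \<psi> \<phi>. \<nu> \<in> hom P l1'' l2'' \<and> \<psi> \<in> hom P k (TenO P l l') \<and> \<phi> \<in> hom P l l1'' \<longrightarrow>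
       h k l' l2'' (coend_class P k l' l2'' (l, \<psi>, Comp P \<nu> \<phi>)) =
       Comp P (TenM P \<nu> (Ident P l')) (h k l' l1'' (coend_class P k l' l1'' (l, \<psi>, \<phi>))))"
proof -
  note R = assms
  note hc = hh_class[OF R] and fd = fx_def[OF R]
  show ?thesis
  proof (intro exI[of _ "hh P"] conjI allI impI)
    fix k l' l'' show "homeomorphic_map (coend_space P k l' l'') (Hom P k (TenO P l'' l')) (hh P k l' l'')"
      by (rule homeo[OF R])
  next
    fix k l' l'' l \<psi> \<phi> assume h: "\<psi> \<in> hom P k (TenO P l l') \<and> \<phi> \<in> hom P l l''"
    then show "hh P k l' l'' (coend_class P k l' l'' (l, \<psi>, \<phi>)) = Comp P (TenM P \<phi> (Ident P l')) \<psi>"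
      using hc by (simp add: fd)
  next
    fix k0 k l' l'' \<kappa> l \<psi> \<phi>
    assume h: "\<kappa> \<in> hom P k0 k \<and> \<psi> \<in> hom P k (TenO P l l') \<and> \<phi> \<in> hom P l l''"
    then have h2: "Comp P \<psi> \<kappa> \<in> hom P k0 (TenO P l l')" using comp_hom[OF R] by blast
    have t: "TenM P \<phi> (Ident P l') \<in> hom P (TenO P l l') (TenO P l'' l')"
      using h ten_hom[OF R] id_hom[OF R] by blast
    show "hh P k0 l' l'' (coend_class P k0 l' l'' (l, Comp P \<psi> \<kappa>, \<phi>)) =
       Comp P (hh P k l' l'' (coend_class P k l' l'' (l, \<psi>, \<phi>))) \<kappa>"
      using hc[OF h2] hc[of \<psi> k l l' \<phi> l''] h assoc[OF R _ _ t, of \<kappa> k0 k \<psi>] by (simp add: fd)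
  next
    fix k l1' l2' l'' \<mu> l \<psi> \<phi>
    assume h: "\<mu> \<in> hom P l1' l2' \<and> \<psi> \<in> hom P k (TenO P l l1') \<and> \<phi> \<in> hom P l l''"
    have t1: "TenM P (Ident P l) \<mu> \<in> hom P (TenO P l l1') (TenO P l l2')"
      using h ten_hom[OF R] id_hom[OF R] by blast
    then have h2: "Comp P (TenM P (Ident P l) \<mu>) \<psi> \<in> hom P k (TenO P l l2')" using h comp_hom[OF R] by blast
    have t2: "TenM P \<phi> (Ident P l2') \<in> hom P (TenO P l l2') (TenO P l'' l2')"
      using h ten_hom[OF R] id_hom[OF R] by blast
    have t3: "TenM P \<phi> (Ident P l1') \<in> hom P (TenO P l l1') (TenO P l'' l1')"
      using h ten_hom[OF R] id_hom[OF R] by blast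
    have t4: "TenM P (Ident P l'') \<mu> \<in> hom P (TenO P l'' l1') (TenO P l'' l2')"
      using h ten_hom[OF R] id_hom[OF R] by blast
    have "hh P k l2' l'' (coend_class P k l2' l'' (l, Comp P (TenM P (Ident P l) \<mu>) \<psi>, \<phi>))
        = Comp P (TenM P \<phi> (Ident P l2')) (Comp P (TenM P (Ident P l) \<mu>) \<psi>)"
      using hc[OF h2] h by (simp add: fd)
    also have "\<dots> = Comp P (Comp P (TenM P \<phi> (Ident P l2')) (TenM P (Ident P l) \<mu>)) \<psi>"
      using assoc[OF R _ t1 t2] h by blast
    also have "Comp P (TenM P \<phi> (Ident P l2')) (TenM P (Ident P l) \<mu>) = TenM P (Comp P \<phi> (Ident P l)) (Comp P (Ident P l2') \<mu>)"
      using ten_comp[OF R, of "Ident P l" l l \<phi> l'' \<mu> l1' l2' "Ident P l2'" l2'] h id_hom[OF R] by simp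
    also have "\<dots> = TenM P \<phi> \<mu>" using h id_l[OF R, of \<mu> l1' l2'] id_r[OF R, of \<phi> l l''] by simp
    also have "TenM P \<phi> \<mu> = TenM P (Comp P (Ident P l'') \<phi>) (Comp P \<mu> (Ident P l1'))"
      using h id_l[OF R, of \<phi> l l''] id_r[OF R, of \<mu> l1' l2'] by simp
    also have "\<dots> = Comp P (TenM P (Ident P l'') \<mu>) (TenM P \<phi> (Ident P l1'))"
      using ten_comp[OF R, of \<phi> l l'' "Ident P l''" l'' "Ident P l1'" l1' l1' \<mu> l2'] h id_hom[OF R] by simp
    also have "Comp P \<dots> \<psi> = Comp P (TenM P (Ident P l'') \<mu>) (Comp P (TenM P \<phi> (Ident P l1')) \<psi>)"
      using assoc[OF R _ t3 t4, of \<psi> k] h by simp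
    also have "\<dots> = Comp P (TenM P (Ident P l'') \<mu>) (hh P k l1' l'' (coend_class P k l1' l'' (l, \<psi>, \<phi>)))"
      using hc h by (simp add: fd)
    finally show "hh P k l2' l'' (coend_class P k l2' l'' (l, Comp P (TenM P (Ident P l) \<mu>) \<psi>, \<phi>)) =
       Comp P (TenM P (Ident P l'') \<mu>) (hh P k l1' l'' (coend_class P k l1' l'' (l, \<psi>, \<phi>)))" .
  next
    fix k l' l1'' l2'' \<nu> l \<psi> \<phi>
    assume h: "\<nu> \<in> hom P l1'' l2'' \<and> \<psi> \<in> hom P k (TenO P l l') \<and> \<phi> \<in> hom P l l1''"
    then have h2: "Comp P \<nu> \<phi> \<in> hom P l l2''" using comp_hom[OF R] by blast
    have t1: "TenM P \<phi> (Ident P l') \<in> hom P (TenO P l l') (TenO P l1'' l')"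
      using h ten_hom[OF R] id_hom[OF R] by blast
    have t2: "TenM P \<nu> (Ident P l') \<in> hom P (TenO P l1'' l') (TenO P l2'' l')"
      using h ten_hom[OF R] id_hom[OF R] by blast
    have "hh P k l' l2'' (coend_class P k l' l2'' (l, \<psi>, Comp P \<nu> \<phi>))
       = Comp P (TenM P (Comp P \<nu> \<phi>) (Comp P (Ident P l') (Ident P l'))) \<psi>"
      using hc[of \<psi> k l l' "Comp P \<nu> \<phi>" l2''] h h2 id_l[OF R, OF id_hom[OF R, of l']] by (simp add: fd)
    also have "\<dots> = Comp P (Comp P (TenM P \<nu> (Ident P l')) (TenM P \<phi> (Ident P l'))) \<psi>"
      using ten_comp[OF R, of \<phi> l l1'' \<nu> l2'' "Ident P l'" l' l' "Ident P l'" l'] h id_hom[OF R] by simp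
    also have "\<dots> = Comp P (TenM P \<nu> (Ident P l')) (Comp P (TenM P \<phi> (Ident P l')) \<psi>)"
      using assoc[OF R _ t1 t2, of \<psi> k] h by simp
    also have "\<dots> = Comp P (TenM P \<nu> (Ident P l')) (hh P k l' l1'' (coend_class P k l' l1'' (l, \<psi>, \<phi>)))"
      using hc h by (simp add: fd)
    finally show "hh P k l' l2'' (coend_class P k l' l2'' (l, \<psi>, Comp P \<nu> \<phi>)) =
       Comp P (TenM P \<nu> (Ident P l')) (hh P k l' l1'' (coend_class P k l' l1'' (l, \<psi>, \<phi>)))" .
  qed
qed


end
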